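(* Let $\tau=\overline{\mathrm{K\ddot ah}(X)}\subset L_{\mathrm{ext}}^\vee\otimes\mathbb{R}$ and $\beta=(0,\dots,0,-1/2,\dots,-1/2)$. Let $\mathcal{I}'\subset\mathbb{C}[\alpha_{i,j}:(i,j)\in J]$ be the ideal generated by (a') $I_{\ell_{\mathrm{ext}}(\mathcal{P})}(\alpha)$ for all primitive collections $\mathcal{P}$ of $\Sigma$, and (b') $\sum_{(i,j)\in J}\langle\bar m,\nu_{i,j}\rangle\alpha_{i,j}-\langle\bar m,\beta\rangle$ for all $\bar m\in M\times\mathbb{Z}^r$. Then $\mathcal{I}'\subset\mathrm{Ind}(\tau,\beta)$, and $\mathcal{I}'$ and $\mathrm{Ind}(\tau,\beta)$ have the same zero locus in $\mathbb{C}^J$.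
   Context: $N\cong\mathbb{Z}^n$, $M$ dual. $X$ smooth projective toric with fan $\Sigma$ and nef-partition $\Sigma(1)=I_1\sqcup\cdots\sqcup I_r$ (each $E_i=\sum_{\rho\in I_i}D_\rho$ nef), $I_i=\{\rho_{i,1},\dots,\rho_{i,n_i}\}$, $J=\{(i,j):1\le i\le r,0\le j\le n_i\}$, $\nu_{i,j}=(\rho_{i,j},e_i)$ ($j\ge1$), $\nu_{i,0}=(0,e_i)$ in $N\times\mathbb{Z}^r$. $A_{\mathrm{ext}}:\mathbb{Z}^J\to N\times\mathbb{Z}^r$, $e_{i,j}\mapsto\nu_{i,j}$, $L_{\mathrm{ext}}=\ker A_{\mathrm{ext}}$, isomorphic via forgetting $(i,0)$-coordinates to $L=\ker(e_{i,j}\mapsto\rho_{i,j})\cong H_2(X,\mathbb{Z})$, so $H^2(X,\mathbb{R})\cong L_{\mathrm{ext}}^\vee\otimes\mathbb{R}$; $\overline{\mathrm{K\ddot ah}(X)}$ is the closed Kähler (= nef) cone in it. For $\ell\in L_{\mathrm{ext}}$ with $\ell=\ell^+-\ell^-$ ($\ell^\pm\ge0$, disjoint supports), $I_\ell(\alpha):=x^{-\alpha}x^{\ell^+}\partial_x^{\ell^+}x^\alpha=\prod_{(i,j)\in J}\prod_{k=0}^{\ell^+_{i,j}-1}(\alpha_{i,j}-k)\in\mathbb{C}[\alpha]$. For a cone $\tau\subset L_{\mathrm{ext}}^\vee\otimes\mathbb{R}$ and $\beta\in\mathbb{C}^{n+r}$, the indicial ideal $\mathrm{Ind}(\tau,\beta)\subset\mathbb{C}[\alpha_{i,j}:(i,j)\in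 J]$ is generated by $I_\ell(\alpha)$ for $0\ne\ell\in\tau^\vee\cap L_{\mathrm{ext}}$ and by $\sum_{(i,j)\in J}\langle\bar m,\nu_{i,j}\rangle\alpha_{i,j}-\langle\bar m,\beta\rangle$ for $\bar m\in M\times\mathbb{Z}^r$. A primitive collection is $\mathcal{P}\subset\Sigma(1)$ not spanning a cone while every proper subset does; $\ell_{\mathrm{ext}}(\mathcal{P})\in L_{\mathrm{ext}}$ is the image of its primitive relation $\ell(\mathcal{P})\in L$ (coefficients of $\sum_{\mathcal{P}}\rho_{i,j}-\sum_{\sigma(1)}c_{i,j}\rho_{i,j}=0$, where $\sigma$ is the cone containing $\sum_\mathcal{P}\rho_{i,j}$ in its relative interior and $c_{i,j}\in\mathbb{Z}_{>0}$). *)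

theory Defs
  imports "HOL-Analysis.Analysis" "HOL-Library.Poly_Mapping"
begin

(* Indices: i ranges over {0..<r} (0-based instead of 1..r), j over {0..nn i}.
   The ray rho_{i,j} (1 <= j <= nn i) is the primitive vector v i j in N = int^'n. *)

definition rays :: "nat \<Rightarrow> (nat \<Rightarrow> nat) \<Rightarrow> (nat \<times> nat) set" where
  "rays r nn = {(i,j). i < r \<and> 1 \<le> j \<and> j \<le> nn i}"

definition Jset :: "nat \<Rightarrow> (nat \<Rightarrow> nat) \<Rightarrow> (nat \<times> nat) set" where
  "Jset r nn = {(i,j). i < r \<and> j \<le> nn i}"

definition rv :: "(nat \<Rightarrow> nat \<Rightarrow> int^'n) \<Rightarrow> nat \<times> nat \<Rightarrow> real^'n" where
  "rv v \<rho> = (\<chi> k. real_of_int (v (fst \<rho>) (snd \<rho>) $ k))"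

definition idot :: "int^'n \<Rightarrow> int^'n \<Rightarrow> int" where
  "idot m u = (\<Sum>k\<in>UNIV. m $ k * u $ k)"

definition coneS :: "(nat \<Rightarrow> nat \<Rightarrow> int^'n) \<Rightarrow> (nat \<times> nat) set \<Rightarrow> (real^'n) set" where
  "coneS v \<sigma> = {x. \<exists>c. (\<forall>\<rho>\<in>\<sigma>. 0 \<le> c \<rho>) \<and> x = (\<Sum>\<rho>\<in>\<sigma>. c \<rho> *\<^sub>R rv v \<rho>)}"

definition unimodular_cone :: "(nat \<Rightarrow> nat \<Rightarrow> int^'n) \<Rightarrow> (nat \<times> nat) set \<Rightarrow> bool" where
  "unimodular_cone v \<sigma> \<longleftrightarrow> inj_on (\<lambda>\<rho>. v (fst \<rho>) (snd \<rho>)) \<sigma> \<and>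
     (\<exists>B :: int^'n^'n. \<bar>det B\<bar> = 1 \<and> (\<forall>\<rho>\<in>\<sigma>. \<exists>k. B $ k = v (fst \<rho>) (snd \<rho>)))"

text \<open>A smooth complete fan Sigma, given by the sets of rays spanning its cones,
  whose set of rays Sigma(1) is exactly the family v i j, (i,j) in rays r nn.\<close>
definition smooth_complete_fan ::
  "nat \<Rightarrow> (nat \<Rightarrow> nat) \<Rightarrow> (nat \<Rightarrow> nat \<Rightarrow> int^'n) \<Rightarrow> (nat \<times> nat) set set \<Rightarrow> bool" where
  "smooth_complete_fan r nn v S \<longleftrightarrow>
     (\<forall>\<sigma>\<in>S. \<sigma> \<subseteq> rays r nn) \<and>
     (\<forall>\<sigma>\<in>S. \<forall>\<tau>. \<tau> \<subseteq> \<sigma> \<longrightarrow> \<tau> \<in> S) \<and>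
     (\<forall>\<rho>\<in>rays r nn. {\<rho>} \<in> S) \<and>
     (\<forall>\<sigma>\<in>S. unimodular_cone v \<sigma>) \<and>
     (\<forall>\<sigma>\<in>S. \<forall>\<sigma>'\<in>S. coneS v \<sigma> \<inter> coneS v \<sigma>' = coneS v (\<sigma> \<inter> \<sigma>')) \<and>
     (\<Union>\<sigma>\<in>S. coneS v \<sigma>) = UNIV"

definition max_cone :: "(nat \<times> nat) set set \<Rightarrow> (nat \<times> nat) set \<Rightarrow> bool" where
  "max_cone S \<sigma> \<longleftrightarrow> \<sigma> \<in> S \<and> (\<forall>\<sigma>'\<in>S. \<sigma> \<subseteq> \<sigma>' \<longrightarrow> \<sigma>' = \<sigma>)"

text \<open>The real torus-invariant divisor sum a_rho D_rho is nef (support function convex).\<close>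
definition nef_div ::
  "nat \<Rightarrow> (nat \<Rightarrow> nat) \<Rightarrow> (nat \<Rightarrow> nat \<Rightarrow> int^'n) \<Rightarrow> (nat \<times> nat) set set \<Rightarrow> (nat \<times> nat \<Rightarrow> real) \<Rightarrow> bool" where
  "nef_div r nn v S a \<longleftrightarrow> (\<forall>\<sigma>. max_cone S \<sigma> \<longrightarrow>
     (\<exists>m::real^'n. (\<forall>\<rho>\<in>\<sigma>. m \<bullet> rv v \<rho> = - a \<rho>) \<and>
                   (\<forall>\<rho>\<in>rays r nn. m \<bullet> rv v \<rho> \<ge> - a \<rho>)))"

text \<open>The divisor is ample (support function strictly convex).\<close>
definition ample_div ::
  "nat \<Rightarrow> (nat \<Rightarrow> nat) \<Rightarrow> (nat \<Rightarrow> nat \<Rightarrow> int^'n) \<Rightarrow> (nat \<times> nat) set set \<Rightarrow> (nat \<times> nat \<Rightarrow> real) \<Rightarrow> bool" where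
  "ample_div r nn v S a \<longleftrightarrow> (\<forall>\<sigma>. max_cone S \<sigma> \<longrightarrow>
     (\<exists>m::real^'n. (\<forall>\<rho>\<in>\<sigma>. m \<bullet> rv v \<rho> = - a \<rho>) \<and>
                   (\<forall>\<rho>\<in>rays r nn - \<sigma>. m \<bullet> rv v \<rho> > - a \<rho>)))"

definition projective_fan ::
  "nat \<Rightarrow> (nat \<Rightarrow> nat) \<Rightarrow> (nat \<Rightarrow> nat \<Rightarrow> int^'n) \<Rightarrow> (nat \<times> nat) set set \<Rightarrow> bool" where
  "projective_fan r nn v S \<longleftrightarrow> (\<exists>a :: nat \<times> nat \<Rightarrow> int. ample_div r nn v S (\<lambda>\<rho>. real_of_int (a \<rho>)))"

text \<open>Nef-partition: each part I_i is nonempty and E_i = sum over I_i of D_rho is nef.\<close>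
definition nef_partition ::
  "nat \<Rightarrow> (nat \<Rightarrow> nat) \<Rightarrow> (nat \<Rightarrow> nat \<Rightarrow> int^'n) \<Rightarrow> (nat \<times> nat) set set \<Rightarrow> bool" where
  "nef_partition r nn v S \<longleftrightarrow> (\<forall>i<r. 1 \<le> nn i \<and>
      nef_div r nn v S (\<lambda>\<rho>. if fst \<rho> = i then 1 else 0))"

text \<open>L_ext = ker A_ext, as integer vectors indexed by J (zero outside J).\<close>
definition Lext :: "nat \<Rightarrow> (nat \<Rightarrow> nat) \<Rightarrow> (nat \<Rightarrow> nat \<Rightarrow> int^'n) \<Rightarrow> (nat \<times> nat \<Rightarrow> int) set" where
  "Lext r nn v = {l. (\<forall>x. x \<notin> Jset r nn \<longrightarrow> l x = 0) \<and>
      (\<Sum>\<rho>\<in>rays r nn. real_of_int (l \<rho>) *\<^sub>R rv v \<rho>) = 0 \<and>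
      (\<forall>i<r. (\<Sum>j\<le>nn i. l (i,j)) = 0)}"

text \<open>tau^dual intersected with L_ext, for tau the closed Kaehler (= nef) cone, where a class
  [sum a_rho D_rho] pairs with l in L_ext as sum over rays of l_rho * a_rho.\<close>
definition nef_dual_Lext ::
  "nat \<Rightarrow> (nat \<Rightarrow> nat) \<Rightarrow> (nat \<Rightarrow> nat \<Rightarrow> int^'n) \<Rightarrow> (nat \<times> nat) set set \<Rightarrow> (nat \<times> nat \<Rightarrow> int) set" where
  "nef_dual_Lext r nn v S = {l \<in> Lext r nn v. \<forall>a. nef_div r nn v S a \<longrightarrow>
      0 \<le> (\<Sum>\<rho>\<in>rays r nn. real_of_int (l \<rho>) * a \<rho>)}"

type_synonym mpoly = "((nat \<times> nat) \<Rightarrow>\<^sub>0 nat) \<Rightarrow>\<^sub>0 complex"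

definition Var :: "nat \<times> nat \<Rightarrow> mpoly" where
  "Var x = Poly_Mapping.single (Poly_Mapping.single x 1) 1"

definition Const :: "complex \<Rightarrow> mpoly" where
  "Const c = Poly_Mapping.single 0 c"

definition eval :: "mpoly \<Rightarrow> (nat \<times> nat \<Rightarrow> complex) \<Rightarrow> complex" where
  "eval p a = (\<Sum>mo\<in>Poly_Mapping.keys p. Poly_Mapping.lookup p mo * (\<Prod>x\<in>Poly_Mapping.keys mo. a x ^ Poly_Mapping.lookup mo x))"

definition ideal_gen :: "mpoly set \<Rightarrow> mpoly set" where
  "ideal_gen G = {p. \<exists>F c. finite F \<and> F \<subseteq> G \<and> p = (\<Sum>g\<in>F. c g * g)}"

definition zero_locus :: "(nat \<times> nat) set \<Rightarrow> mpoly set \<Rightarrow> (nat \<times> nat \<Rightarrow> complex) set" where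
  "zero_locus J I = {a. (\<forall>x. x \<notin> J \<longrightarrow> a x = 0) \<and> (\<forall>p\<in>I. eval p a = 0)}"

definition I_ell :: "(nat \<times> nat) set \<Rightarrow> (nat \<times> nat \<Rightarrow> int) \<Rightarrow> mpoly" where
  "I_ell J l = (\<Prod>x\<in>J. \<Prod>k<nat (l x). (Var x - Const (of_nat k)))"

definition pair_nu :: "(nat \<Rightarrow> nat \<Rightarrow> int^'n) \<Rightarrow> int^'n \<Rightarrow> (nat \<Rightarrow> int) \<Rightarrow> nat \<times> nat \<Rightarrow> int" where
  "pair_nu v m c x = (if snd x = 0 then 0 else idot m (v (fst x) (snd x))) + c (fst x)"

text \<open>Linear generators (b): beta = (betaN, betar) in C^n x C^r.\<close>
definition lin_gens ::
  "nat \<Rightarrow> (nat \<Rightarrow> nat) \<Rightarrow> (nat \<Rightarrow> nat \<Rightarrow> int^'n) \<Rightarrow> complex^'n \<Rightarrow> (nat \<Rightarrow> complex) \<Rightarrow> mpoly set" where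
  "lin_gens r nn v betaN betar =
     {(\<Sum>x\<in>Jset r nn. Const (of_int (pair_nu v m c x)) * Var x)
        - Const ((\<Sum>k\<in>UNIV. of_int (m $ k) * betaN $ k) + (\<Sum>i<r. of_int (c i) * betar i))
      | m c. True}"

definition Ind_nef ::
  "nat \<Rightarrow> (nat \<Rightarrow> nat) \<Rightarrow> (nat \<Rightarrow> nat \<Rightarrow> int^'n) \<Rightarrow> (nat \<times> nat) set set
     \<Rightarrow> complex^'n \<Rightarrow> (nat \<Rightarrow> complex) \<Rightarrow> mpoly set" where
  "Ind_nef r nn v S betaN betar = ideal_gen
     ({I_ell (Jset r nn) l | l. l \<in> nef_dual_Lext r nn v S \<and> l \<noteq> (\<lambda>_. 0)}
      \<union> lin_gens r nn v betaN betar)"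

definition primitive_collection ::
  "nat \<Rightarrow> (nat \<Rightarrow> nat) \<Rightarrow> (nat \<times> nat) set set \<Rightarrow> (nat \<times> nat) set \<Rightarrow> bool" where
  "primitive_collection r nn S P \<longleftrightarrow> P \<subseteq> rays r nn \<and> P \<notin> S \<and> (\<forall>Q. Q \<subset> P \<longrightarrow> Q \<in> S)"

text \<open>l is the primitive relation of P (as element of L): sum_P v - sum_sigma c v = 0 where
  sigma is the cone containing sum_P v in its relative interior and c > 0.\<close>
definition primitive_relation ::
  "(nat \<Rightarrow> nat \<Rightarrow> int^'n) \<Rightarrow> (nat \<times> nat) set set \<Rightarrow> (nat \<times> nat) set \<Rightarrow> (nat \<times> nat \<Rightarrow> int) \<Rightarrow> bool" where
  "primitive_relation v S P l \<longleftrightarrow> (\<exists>\<sigma>\<in>S. \<exists>c :: nat \<times> nat \<Rightarrow> int.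
      (\<forall>\<rho>\<in>\<sigma>. 0 < c \<rho>) \<and>
      (\<Sum>\<rho>\<in>P. rv v \<rho>) = (\<Sum>\<rho>\<in>\<sigma>. real_of_int (c \<rho>) *\<^sub>R rv v \<rho>) \<and>
      l = (\<lambda>\<rho>. (if \<rho> \<in> P then 1 else 0) - (if \<rho> \<in> \<sigma> then c \<rho> else 0)))"

text \<open>Image in L_ext of l in L (add the (i,0)-coordinates).\<close>
definition ext_L :: "nat \<Rightarrow> (nat \<Rightarrow> nat) \<Rightarrow> (nat \<times> nat \<Rightarrow> int) \<Rightarrow> (nat \<times> nat \<Rightarrow> int)" where
  "ext_L r nn l x = (if x \<in> rays r nn then l x
      else if x \<in> Jset r nn then - (\<Sum>j\<in>{1..nn (fst x)}. l (fst x, j)) else 0)"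

definition I_prime ::
  "nat \<Rightarrow> (nat \<Rightarrow> nat) \<Rightarrow> (nat \<Rightarrow> nat \<Rightarrow> int^'n) \<Rightarrow> (nat \<times> nat) set set
     \<Rightarrow> complex^'n \<Rightarrow> (nat \<Rightarrow> complex) \<Rightarrow> mpoly set" where
  "I_prime r nn v S betaN betar = ideal_gen
     ({I_ell (Jset r nn) (ext_L r nn l) | P l.
         primitive_collection r nn S P \<and> primitive_relation v S P l}
      \<union> lin_gens r nn v betaN betar)"

end

theory Submission
  imports Defs
begin

definition mon :: "((nat \<times> nat) \<Rightarrow>\<^sub>0 nat) \<Rightarrow> (nat \<times> nat \<Rightarrow> complex) \<Rightarrow> complex" where
  "mon mo a = (\<Prod>x\<in>Poly_Mapping.keys mo. a x ^ Poly_Mapping.lookup mo x)"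

lemma mon_superset:
  assumes "finite A" "Poly_Mapping.keys mo \<subseteq> A"
  shows "mon mo a = (\<Prod>x\<in>A. a x ^ Poly_Mapping.lookup mo x)"
  unfolding mon_def
  by (rule prod.mono_neutral_left) (use assms in \<open>auto simp: in_keys_iff\<close>)

lemma mon_add: "mon (m1 + m2) a = mon m1 a * mon m2 a"
proof -
  let ?A = "Poly_Mapping.keys m1 \<union> Poly_Mapping.keys m2"
  have f: "finite ?A" by simp
  have k: "Poly_Mapping.keys (m1 + m2) \<subseteq> ?A" by (rule keys_add)
  have "mon (m1 + m2) a = (\<Prod>x\<in>?A. a x ^ Poly_Mapping.lookup (m1+m2) x)"
    by (rule mon_superset[OF f k])
  also have "\<dots> = (\<Prod>x\<in>?A. a x ^ Poly_Mapping.lookup m1 x * a x ^ Poly_Mapping.lookup m2 x)"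
    by (rule prod.cong) (simp_all only: lookup_add power_add)
  also have "\<dots> = (\<Prod>x\<in>?A. a x ^ Poly_Mapping.lookup m1 x) * (\<Prod>x\<in>?A. a x ^ Poly_Mapping.lookup m2 x)"
    by (rule prod.distrib)
  also have "\<dots> = mon m1 a * mon m2 a"
    using mon_superset[OF f, of m1 a] mon_superset[OF f, of m2 a] by simp
  finally show ?thesis .
qed

lemma mon_zero [simp]: "mon 0 a = 1" by (simp add: mon_def)

lemma eval_mon: "eval p a = (\<Sum>mo\<in>Poly_Mapping.keys p. Poly_Mapping.lookup p mo * mon mo a)"
  by (simp add: eval_def mon_def)

lemma eval_superset:
  assumes "finite A" "Poly_Mapping.keys p \<subseteq> A"
  shows "eval p a = (\<Sum>mo\<in>A. Poly_Mapping.lookup p mo * mon mo a)"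
  unfolding eval_mon
  by (rule sum.mono_neutral_left) (use assms in \<open>auto simp: in_keys_iff\<close>)

lemma eval_add: "eval (p + q) a = eval p a + eval q a"
proof -
  let ?A = "Poly_Mapping.keys p \<union> Poly_Mapping.keys q"
  have f: "finite ?A" by simp
  have k: "Poly_Mapping.keys (p + q) \<subseteq> ?A" by (rule keys_add)
  have "eval (p + q) a = (\<Sum>mo\<in>?A. Poly_Mapping.lookup (p+q) mo * mon mo a)"
    by (rule eval_superset[OF f k])
  also have "\<dots> = (\<Sum>mo\<in>?A. Poly_Mapping.lookup p mo * mon mo a + Poly_Mapping.lookup q mo * mon mo a)"
    by (rule sum.cong) (simp_all only: lookup_add distrib_right)
  also have "\<dots> = (\<Sum>mo\<in>?A. Poly_Mapping.lookup p mo * mon mo a) + (\<Sum>mo\<in>?A. Poly_Mapping.lookup q mo * mon mo a)"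
    by (rule sum.distrib)
  also have "\<dots> = eval p a + eval q a"
    using eval_superset[OF f, of p a] eval_superset[OF f, of q a] by simp
  finally show ?thesis .
qed

lemma eval_uminus: "eval (- p) a = - eval p a"
  by (simp add: eval_mon sum_negf)

lemma eval_diff: "eval (p - q) a = eval p a - eval q a"
  using eval_add[of p "-q" a] eval_uminus[of q a] by simp

lemma eval_zero [simp]: "eval 0 a = 0" by (simp add: eval_def)

lemma eval_sum: "eval (\<Sum>i\<in>I. f i) a = (\<Sum>i\<in>I. eval (f i) a)"
  by (induction I rule: infinite_finite_induct) (auto simp: eval_add)

lemma eval_single: "eval (Poly_Mapping.single m c) a = c * mon m a"
  by (simp add: eval_mon)

lemma decomp: "p = (\<Sum>mo\<in>Poly_Mapping.keys p. Poly_Mapping.single mo (Poly_Mapping.lookup p mo))"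
proof (rule poly_mapping_eqI)
  fix k
  have "Poly_Mapping.lookup (\<Sum>mo\<in>Poly_Mapping.keys p. Poly_Mapping.single mo (Poly_Mapping.lookup p mo)) k
     = (\<Sum>mo\<in>Poly_Mapping.keys p. if mo = k then Poly_Mapping.lookup p mo else 0)"
    by (simp only: lookup_sum lookup_single when_def)
  also have "\<dots> = (if k \<in> Poly_Mapping.keys p then Poly_Mapping.lookup p k else 0)"
    by (rule sum.delta) simp
  also have "\<dots> = Poly_Mapping.lookup p k" by (simp add: in_keys_iff)
  finally show "Poly_Mapping.lookup p k = Poly_Mapping.lookup (\<Sum>mo\<in>Poly_Mapping.keys p. Poly_Mapping.single mo (Poly_Mapping.lookup p mo)) k" by simp
qed

lemma eval_mult: "eval (p * q) a = eval p a * eval q a"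
proof -
  have "p * q = (\<Sum>m\<in>Poly_Mapping.keys p. Poly_Mapping.single m (Poly_Mapping.lookup p m)) *
        (\<Sum>m'\<in>Poly_Mapping.keys q. Poly_Mapping.single m' (Poly_Mapping.lookup q m'))"
    by (rule arg_cong2[where f="(*)"]) (rule decomp)+
  also have "\<dots> = (\<Sum>m\<in>Poly_Mapping.keys p. \<Sum>m'\<in>Poly_Mapping.keys q.
      Poly_Mapping.single m (Poly_Mapping.lookup p m) * Poly_Mapping.single m' (Poly_Mapping.lookup q m'))"
    by (rule sum_product)
  finally have pq: "p * q = (\<Sum>m\<in>Poly_Mapping.keys p. \<Sum>m'\<in>Poly_Mapping.keys q.
      Poly_Mapping.single (m + m') (Poly_Mapping.lookup p m * Poly_Mapping.lookup q m'))"
    by (simp only: mult_single)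
  have "eval (p * q) a = (\<Sum>m\<in>Poly_Mapping.keys p. \<Sum>m'\<in>Poly_Mapping.keys q.
      eval (Poly_Mapping.single (m + m') (Poly_Mapping.lookup p m * Poly_Mapping.lookup q m')) a)"
    unfolding pq by (simp only: eval_sum)
  also have "\<dots> = (\<Sum>m\<in>Poly_Mapping.keys p. \<Sum>m'\<in>Poly_Mapping.keys q.
      (Poly_Mapping.lookup p m * mon m a) * (Poly_Mapping.lookup q m' * mon m' a))"
    by (simp only: eval_single mon_add mult_ac)
  also have "\<dots> = eval p a * eval q a"
    by (simp only: eval_mon sum_product)
  finally show ?thesis .
qed

lemma eval_one [simp]: "eval 1 a = 1"
  using eval_single[of 0 1 a] by simp

lemma eval_prod: "eval (\<Prod>i\<in>I. f i) a = (\<Prod>i\<in>I. eval (f i) a)"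
  by (induction I rule: infinite_finite_induct) (auto simp: eval_mult)

lemma eval_Var [simp]: "eval (Var x) a = a x"
  by (simp add: Var_def eval_single mon_def)

lemma eval_Const [simp]: "eval (Const c) a = c"
  by (simp add: Const_def eval_single)

lemma det_Ints:
  fixes A :: "real^'n^'n"
  assumes "\<forall>i j. A$i$j \<in> \<int>"
  shows "det A \<in> \<int>"
  unfolding det_def using assms
  by (intro Ints_sum Ints_mult Ints_prod) auto

lemma det_of_int:
  fixes B :: "int^'n^'n"
  shows "det (\<chi> i j. real_of_int (B$i$j)) = real_of_int (det B)"
  unfolding det_def by (simp add: of_int_sum of_int_prod)

lemma unimod_coords:
  fixes v :: "nat \<Rightarrow> nat \<Rightarrow> int^'n"
  assumes u: "unimodular_cone v \<sigma>" and fin: "finite \<sigma>"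
    and eq: "(\<Sum>\<rho>\<in>\<sigma>. f \<rho> *\<^sub>R rv v \<rho>) = w"
  shows "\<exists>A::real^'n^'n. (\<forall>i j. A$i$j \<in> \<int>) \<and> \<bar>det A\<bar> = 1 \<and>
     (\<forall>\<rho>\<in>\<sigma>. \<exists>k. f \<rho> * det A = det(\<chi> i j. if j = k then w$i else A$i$j))"
proof -
  from u obtain B :: "int^'n^'n" where dB: "\<bar>det B\<bar> = 1"
    and hB: "\<forall>\<rho>\<in>\<sigma>. \<exists>k. B $ k = v (fst \<rho>) (snd \<rho>)"
    and inj: "inj_on (\<lambda>\<rho>. v (fst \<rho>) (snd \<rho>)) \<sigma>"
    unfolding unimodular_cone_def by blast
  define kk where "kk \<rho> = (SOME k. B $ k = v (fst \<rho>) (snd \<rho>))" for \<rho>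
  have kk: "B $ (kk \<rho>) = v (fst \<rho>) (snd \<rho>)" if "\<rho> \<in> \<sigma>" for \<rho>
    unfolding kk_def using hB that by (metis (mono_tags, lifting) someI_ex)
  have injk: "inj_on kk \<sigma>"
  proof (rule inj_onI)
    fix x y assume "x \<in> \<sigma>" "y \<in> \<sigma>" "kk x = kk y"
    then have "v (fst x) (snd x) = v (fst y) (snd y)" using kk by metis
    then show "x = y" using inj \<open>x \<in> \<sigma>\<close> \<open>y \<in> \<sigma>\<close> by (meson inj_onD)
  qed
  define A :: "real^'n^'n" where "A = (\<chi> i j. real_of_int (B$j$i))"
  define d :: "real^'n" where "d = (\<chi> k. if k \<in> kk`\<sigma> then f (inv_into \<sigma> kk k) else 0)"
  have "A = transpose (\<chi> i j. real_of_int (B$i$j))"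
    by (simp add: A_def transpose_def)
  then have detA: "det A = real_of_int (det B)" by (simp add: det_of_int)
  have Av: "A *v d = w"
  proof -
    have "(A *v d) $ i = w $ i" for i
    proof -
      have "(A *v d) $ i = (\<Sum>j\<in>UNIV. A$i$j * d$j)"
        by (simp add: matrix_vector_mult_def)
      also have "\<dots> = (\<Sum>j\<in>kk`\<sigma>. real_of_int (B$j$i) * f (inv_into \<sigma> kk j))"
        by (rule sum.mono_neutral_cong_right) (auto simp: A_def d_def)
      also have "\<dots> = (\<Sum>\<rho>\<in>\<sigma>. real_of_int (B$(kk \<rho>)$i) * f \<rho>)"
        by (subst sum.reindex[OF injk]) (auto simp: inv_into_f_f[OF injk])
      also have "\<dots> = (\<Sum>\<rho>\<in>\<sigma>. f \<rho> * rv v \<rho> $ i)"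
        by (rule sum.cong) (auto simp: kk rv_def)
      also have "\<dots> = w $ i"
        using eq[symmetric] by simp
      finally show ?thesis .
    qed
    then show ?thesis by (simp add: vec_eq_iff)
  qed
  show ?thesis
  proof (rule exI[of _ A], intro conjI allI ballI)
    fix i j show "A$i$j \<in> \<int>" by (simp add: A_def)
  next
    show "\<bar>det A\<bar> = 1" using dB detA by (metis of_int_1 of_int_abs)
  next
    fix \<rho> assume "\<rho> \<in> \<sigma>"
    have "d $ kk \<rho> = f \<rho>" using \<open>\<rho> \<in> \<sigma>\<close> by (simp add: d_def inv_into_f_f[OF injk])
    moreover have "det(\<chi> i j. if j = kk \<rho> then w$i else A$i$j) = d $ kk \<rho> * det A"
      using cramer_lemma[of "kk \<rho>" A d] unfolding Av .
    ultimately show "\<exists>k. f \<rho> * det A = det(\<chi> i j. if j = k then w$i else A$i$j)"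
      by (intro exI[of _ "kk \<rho>"]) simp
  qed
qed

lemma unimod_int:
  fixes v :: "nat \<Rightarrow> nat \<Rightarrow> int^'n"
  assumes u: "unimodular_cone v \<sigma>" and fin: "finite \<sigma>"
    and eq: "(\<Sum>\<rho>\<in>\<sigma>. f \<rho> *\<^sub>R rv v \<rho>) = w" and wi: "\<forall>i. w$i \<in> \<int>" and "\<rho> \<in> \<sigma>"
  shows "f \<rho> \<in> \<int>"
proof -
  obtain A :: "real^'n^'n" where Ai: "\<forall>i j. A$i$j \<in> \<int>" and dA: "\<bar>det A\<bar> = 1"
    and h: "\<forall>\<rho>\<in>\<sigma>. \<exists>k. f \<rho> * det A = det(\<chi> i j. if j = k then w$i else A$i$j)"
    using unimod_coords[OF u fin eq] by blast
  obtain k where k: "f \<rho> * det A = det(\<chi> i j. if j = k then w$i else A$i$j)" using h \<open>\<rho> \<in> \<sigma>\<close> by blast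
  have "det(\<chi> i j. if j = k then w$i else A$i$j) \<in> \<int>"
    by (rule det_Ints) (simp add: Ai wi)
  then have "f \<rho> * det A \<in> \<int>" using k by simp
  moreover have "det A = 1 \<or> det A = -1" using dA by linarith
  ultimately show ?thesis by (auto simp: minus_in_Ints_iff)
qed

lemma unimod_indep:
  fixes v :: "nat \<Rightarrow> nat \<Rightarrow> int^'n"
  assumes u: "unimodular_cone v \<sigma>" and fin: "finite \<sigma>"
    and eq: "(\<Sum>\<rho>\<in>\<sigma>. f \<rho> *\<^sub>R rv v \<rho>) = 0" and "\<rho> \<in> \<sigma>"
  shows "f \<rho> = 0"
proof -
  obtain A :: "real^'n^'n" where dA: "\<bar>det A\<bar> = 1"
    and h: "\<forall>\<rho>\<in>\<sigma>. \<exists>k. f \<rho> * det A = det(\<chi> i j. if j = k then (0::real^'n)$i else A$i$j)"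
    using unimod_coords[OF u fin eq] by blast
  obtain k where k: "f \<rho> * det A = det(\<chi> i j. if j = k then (0::real^'n)$i else A$i$j)" using h \<open>\<rho> \<in> \<sigma>\<close> by blast
  have "column k (\<chi> i j. if j = k then (0::real^'n)$i else A$i$j) = 0"
    by (simp add: column_def vec_eq_iff)
  then have "det(\<chi> i j. if j = k then (0::real^'n)$i else A$i$j) = 0"
    by (rule det_zero_column)
  then show ?thesis using k dA by auto
qed

lemma rays_Sigma: "rays r nn = (SIGMA i:{..<r}. {1..nn i})"
  by (auto simp: rays_def)

lemma Jset_Sigma: "Jset r nn = (SIGMA i:{..<r}. {..nn i})"
  by (auto simp: Jset_def)

lemma finite_rays [simp]: "finite (rays r nn)"
  by (simp add: rays_Sigma)

lemma finite_Jset [simp]: "finite (Jset r nn)"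
  by (simp add: Jset_Sigma)

lemma rays_sub_J: "rays r nn \<subseteq> Jset r nn"
  by (auto simp: rays_def Jset_def)

lemma J_not_rays: "x \<in> Jset r nn \<Longrightarrow> x \<notin> rays r nn \<Longrightarrow> snd x = 0 \<and> fst x < r"
  by (auto simp: rays_def Jset_def)

lemma fan_sub: "smooth_complete_fan r nn v S \<Longrightarrow> \<sigma> \<in> S \<Longrightarrow> \<sigma> \<subseteq> rays r nn"
  by (auto simp: smooth_complete_fan_def)

lemma fan_down: "smooth_complete_fan r nn v S \<Longrightarrow> \<sigma> \<in> S \<Longrightarrow> \<tau> \<subseteq> \<sigma> \<Longrightarrow> \<tau> \<in> S"
  by (auto simp: smooth_complete_fan_def)

lemma fan_unimod: "smooth_complete_fan r nn v S \<Longrightarrow> \<sigma> \<in> S \<Longrightarrow> unimodular_cone v \<sigma>"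
  by (auto simp: smooth_complete_fan_def)

lemma fan_finite: "smooth_complete_fan r nn v S \<Longrightarrow> finite S"
proof -
  assume f: "smooth_complete_fan r nn v S"
  have "S \<subseteq> Pow (rays r nn)" using fan_sub[OF f] by blast
  then show ?thesis by (rule finite_subset) simp
qed

lemma max_exists:
  assumes f: "smooth_complete_fan r nn v S" and "\<sigma> \<in> S"
  shows "\<exists>\<sigma>m. max_cone S \<sigma>m \<and> \<sigma> \<subseteq> \<sigma>m"
  using finite_has_maximal2[OF fan_finite[OF f] \<open>\<sigma> \<in> S\<close>]
  unfolding max_cone_def by blast

lemma nef_ineq:
  assumes f: "smooth_complete_fan r nn v S" and nef: "nef_div r nn v S a"
    and s: "\<sigma> \<in> S" and P: "P \<subseteq> rays r nn"
    and eq: "(\<Sum>\<rho>\<in>P. rv v \<rho>) = (\<Sum>\<rho>\<in>\<sigma>. real_of_int (c \<rho>) *\<^sub>R rv v \<rho>)"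
  shows "(\<Sum>\<rho>\<in>\<sigma>. real_of_int (c \<rho>) * a \<rho>) \<le> (\<Sum>\<rho>\<in>P. a \<rho>)"
proof -
  obtain \<sigma>m where mc: "max_cone S \<sigma>m" and sub: "\<sigma> \<subseteq> \<sigma>m" using max_exists[OF f s] by blast
  obtain m :: "real^'a" where h1: "\<forall>\<rho>\<in>\<sigma>m. m \<bullet> rv v \<rho> = - a \<rho>"
    and h2: "\<forall>\<rho>\<in>rays r nn. m \<bullet> rv v \<rho> \<ge> - a \<rho>"
    using nef mc unfolding nef_div_def by blast
  have "(\<Sum>\<rho>\<in>\<sigma>. real_of_int (c \<rho>) * a \<rho>) = (\<Sum>\<rho>\<in>\<sigma>. - (real_of_int (c \<rho>) * (m \<bullet> rv v \<rho>)))"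
    by (rule sum.cong) (use h1 sub in auto)
  also have "\<dots> = - (m \<bullet> (\<Sum>\<rho>\<in>\<sigma>. real_of_int (c \<rho>) *\<^sub>R rv v \<rho>))"
    by (simp add: inner_sum_right sum_negf)
  also have "\<dots> = (\<Sum>\<rho>\<in>P. - (m \<bullet> rv v \<rho>))"
    by (simp add: eq[symmetric] inner_sum_right sum_negf)
  also have "\<dots> \<le> (\<Sum>\<rho>\<in>P. a \<rho>)"
    by (rule sum_mono) (use h2 P in force)
  finally show ?thesis .
qed

lemma ample_nef:
  assumes "ample_div r nn v S a" shows "nef_div r nn v S a"
  unfolding nef_div_def
proof (intro allI impI)
  fix \<sigma> assume "max_cone S \<sigma>"
  then obtain m :: "real^'a" where h1: "\<forall>\<rho>\<in>\<sigma>. m \<bullet> rv v \<rho> = - a \<rho>"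
    and h2: "\<forall>\<rho>\<in>rays r nn - \<sigma>. m \<bullet> rv v \<rho> > - a \<rho>"
    using assms unfolding ample_div_def by blast
  have "\<forall>\<rho>\<in>rays r nn. m \<bullet> rv v \<rho> \<ge> - a \<rho>"
  proof
    fix \<rho> assume "\<rho> \<in> rays r nn"
    then show "m \<bullet> rv v \<rho> \<ge> - a \<rho>"
      using h1 h2 by (cases "\<rho> \<in> \<sigma>") (auto intro: less_imp_le)
  qed
  then show "\<exists>m::real^'a. (\<forall>\<rho>\<in>\<sigma>. m \<bullet> rv v \<rho> = - a \<rho>) \<and> (\<forall>\<rho>\<in>rays r nn. m \<bullet> rv v \<rho> \<ge> - a \<rho>)"
    using h1 by (intro exI[of _ m] conjI)
qed

lemma sum_split0:
  "(\<Sum>j\<le>n. g j) = g 0 + (\<Sum>j\<in>{1..n}. g (j::nat))"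
proof -
  have "{..n} = insert 0 {1..n}" by auto
  then show ?thesis by simp
qed

lemma sum_if_sub:
  assumes "finite A" "B \<subseteq> A"
  shows "(\<Sum>x\<in>A. if x \<in> B then f x else 0) = sum f B"
proof -
  have "(\<Sum>x\<in>A. if x \<in> B then f x else 0) = sum f (A \<inter> B)"
    by (rule sum.inter_restrict[OF assms(1), symmetric])
  also have "A \<inter> B = B" using assms(2) by blast
  finally show ?thesis .
qed

lemma ext_L_rays: "x \<in> rays r nn \<Longrightarrow> ext_L r nn l x = l x"
  by (simp add: ext_L_def)

lemma prim_rel_dual:
  assumes f: "smooth_complete_fan r nn v S"
    and P: "primitive_collection r nn S P" and l: "primitive_relation v S P l"
  shows "ext_L r nn l \<in> nef_dual_Lext r nn v S \<and> ext_L r nn l \<noteq> (\<lambda>_. 0)"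
proof -
  obtain \<sigma> c where s: "\<sigma> \<in> S" and cpos: "\<forall>\<rho>\<in>\<sigma>. 0 < c \<rho>"
    and eq: "(\<Sum>\<rho>\<in>P. rv v \<rho>) = (\<Sum>\<rho>\<in>\<sigma>. real_of_int (c \<rho>) *\<^sub>R rv v \<rho>)"
    and ld: "l = (\<lambda>\<rho>. (if \<rho> \<in> P then 1 else 0) - (if \<rho> \<in> \<sigma> then c \<rho> else 0))"
    using l unfolding primitive_relation_def by blast
  have sR: "\<sigma> \<subseteq> rays r nn" using fan_sub[OF f s] .
  have PR: "P \<subseteq> rays r nn" and PS: "P \<notin> S" using P by (auto simp: primitive_collection_def)
  let ?L = "ext_L r nn l"
  let ?R = "rays r nn"
  have c1: "\<forall>x. x \<notin> Jset r nn \<longrightarrow> ?L x = 0"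
    using rays_sub_J by (auto simp: ext_L_def)
  have "(\<Sum>\<rho>\<in>?R. real_of_int (?L \<rho>) *\<^sub>R rv v \<rho>)
      = (\<Sum>\<rho>\<in>?R. (if \<rho> \<in> P then rv v \<rho> else 0) - (if \<rho> \<in> \<sigma> then real_of_int (c \<rho>) *\<^sub>R rv v \<rho> else 0))"
    by (rule sum.cong) (auto simp: ext_L_rays ld scaleR_left_diff_distrib)
  also have "\<dots> = (\<Sum>\<rho>\<in>P. rv v \<rho>) - (\<Sum>\<rho>\<in>\<sigma>. real_of_int (c \<rho>) *\<^sub>R rv v \<rho>)"
    by (simp only: sum_subtractf sum_if_sub[OF finite_rays PR] sum_if_sub[OF finite_rays sR])
  also have "\<dots> = 0" using eq by simp
  finally have c2: "(\<Sum>\<rho>\<in>?R. real_of_int (?L \<rho>) *\<^sub>R rv v \<rho>) = 0" .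
  have c3: "\<forall>i<r. (\<Sum>j\<le>nn i. ?L (i,j)) = 0"
  proof (intro allI impI)
    fix i assume i: "i < r"
    have "(\<Sum>j\<le>nn i. ?L (i,j)) = ?L (i,0) + (\<Sum>j\<in>{1..nn i}. ?L (i,j))"
      by (rule sum_split0)
    also have "?L (i,0) = - (\<Sum>j\<in>{1..nn i}. l (i, j))"
      using i by (simp add: ext_L_def rays_def Jset_def)
    also have "(\<Sum>j\<in>{1..nn i}. ?L (i,j)) = (\<Sum>j\<in>{1..nn i}. l (i, j))"
      by (rule sum.cong) (use i in \<open>auto simp: ext_L_def rays_def\<close>)
    finally show "(\<Sum>j\<le>nn i. ?L (i,j)) = 0" by simp
  qed
  have c4: "\<forall>a. nef_div r nn v S a \<longrightarrow> 0 \<le> (\<Sum>\<rho>\<in>?R. real_of_int (?L \<rho>) * a \<rho>)"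
  proof (intro allI impI)
    fix a assume nef: "nef_div r nn v S a"
    have "(\<Sum>\<rho>\<in>?R. real_of_int (?L \<rho>) * a \<rho>)
      = (\<Sum>\<rho>\<in>?R. (if \<rho> \<in> P then a \<rho> else 0) - (if \<rho> \<in> \<sigma> then real_of_int (c \<rho>) * a \<rho> else 0))"
      by (rule sum.cong) (auto simp: ext_L_rays ld left_diff_distrib)
    also have "\<dots> = (\<Sum>\<rho>\<in>P. a \<rho>) - (\<Sum>\<rho>\<in>\<sigma>. real_of_int (c \<rho>) * a \<rho>)"
      by (simp only: sum_subtractf sum_if_sub[OF finite_rays PR] sum_if_sub[OF finite_rays sR])
    finally show "0 \<le> (\<Sum>\<rho>\<in>?R. real_of_int (?L \<rho>) * a \<rho>)"
      using nef_ineq[OF f nef s PR eq] by simp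
  qed
  have "\<not> P \<subseteq> \<sigma>" using fan_down[OF f s] PS by blast
  then obtain \<rho> where "\<rho> \<in> P" "\<rho> \<notin> \<sigma>" by blast
  moreover have "\<rho> \<in> ?R" using PR \<open>\<rho> \<in> P\<close> by blast
  ultimately have "?L \<rho> = 1" using ext_L_rays[of \<rho> r nn l] by (simp add: ld)
  then have "?L \<noteq> (\<lambda>_. 0)" by (metis zero_neq_one)
  moreover have "?L \<in> nef_dual_Lext r nn v S"
    unfolding nef_dual_Lext_def Lext_def using c1 c2 c3 c4 by blast
  ultimately show ?thesis by blast
qed

lemma dual_i0:
  assumes nefp: "nef_partition r nn v S" and L: "L \<in> nef_dual_Lext r nn v S" and i: "i < r"
  shows "L (i, 0) \<le> 0"
proof -
  have nef: "nef_div r nn v S (\<lambda>\<rho>. if fst \<rho> = i then 1 else 0)"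
    using nefp i unfolding nef_partition_def by blast
  have ge: "0 \<le> (\<Sum>\<rho>\<in>rays r nn. real_of_int (L \<rho>) * (if fst \<rho> = i then 1 else 0))"
    using L nef unfolding nef_dual_Lext_def by blast
  have sub: "(\<lambda>j. (i,j)) ` {1..nn i} \<subseteq> rays r nn" using i by (auto simp: rays_def)
  have "(\<Sum>\<rho>\<in>rays r nn. real_of_int (L \<rho>) * (if fst \<rho> = i then 1 else 0))
      = (\<Sum>\<rho>\<in>rays r nn. if \<rho> \<in> (\<lambda>j. (i,j)) ` {1..nn i} then real_of_int (L \<rho>) else 0)"
    by (rule sum.cong) (auto simp: rays_def)
  also have "\<dots> = (\<Sum>\<rho>\<in>(\<lambda>j. (i,j)) ` {1..nn i}. real_of_int (L \<rho>))"
    by (rule sum_if_sub[OF finite_rays sub])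
  also have "\<dots> = (\<Sum>j\<in>{1..nn i}. real_of_int (L (i,j)))"
    by (rule sum.reindex_cong[where l="\<lambda>j. (i,j)"]) (auto simp: inj_on_def)
  finally have "0 \<le> (\<Sum>j\<in>{1..nn i}. real_of_int (L (i,j)))" using ge by simp
  then have "0 \<le> real_of_int (\<Sum>j\<in>{1..nn i}. L (i,j))" unfolding of_int_sum .
  then have g: "0 \<le> (\<Sum>j\<in>{1..nn i}. L (i,j))" by (simp only: of_int_0_le_iff)
  have "(\<Sum>j\<le>nn i. L (i,j)) = 0" using L i unfolding nef_dual_Lext_def Lext_def by blast
  then have "L (i,0) + (\<Sum>j\<in>{1..nn i}. L (i,j)) = 0" by (simp only: sum_split0)
  then show ?thesis using g by linarith
qed

lemma gen_sub: "G \<subseteq> ideal_gen G"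
proof
  fix g assume "g \<in> G"
  then show "g \<in> ideal_gen G"
    unfolding ideal_gen_def
    by (intro CollectI exI[of _ "{g}"] exI[of _ "\<lambda>_. 1"]) simp
qed

lemma ideal_gen_mono: "G \<subseteq> H \<Longrightarrow> ideal_gen G \<subseteq> ideal_gen H"
  unfolding ideal_gen_def by blast

lemma eval_I_ell:
  "eval (I_ell J l) a = (\<Prod>x\<in>J. \<Prod>k<nat (l x). (a x - of_nat k))"
  by (simp only: I_ell_def eval_prod eval_diff eval_Var eval_Const)

lemma eval_I_ell_zero:
  assumes "finite J"
  shows "eval (I_ell J l) a = 0 \<longleftrightarrow> (\<exists>x\<in>J. \<exists>k<nat (l x). a x = of_nat k)"
  unfolding eval_I_ell using assms by (auto simp: prod_zero_iff)

lemma prim_rel_exists: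
  assumes f: "smooth_complete_fan r nn v S" and P: "primitive_collection r nn S P"
  shows "\<exists>l. primitive_relation v S P l"
proof -
  have PR: "P \<subseteq> rays r nn" using P by (simp add: primitive_collection_def)
  let ?w = "(\<Sum>\<rho>\<in>P. rv v \<rho>)"
  have "?w \<in> (\<Union>\<sigma>\<in>S. coneS v \<sigma>)" using f by (simp add: smooth_complete_fan_def)
  then obtain \<sigma> c where s: "\<sigma> \<in> S" and cnn: "\<forall>\<rho>\<in>\<sigma>. 0 \<le> c \<rho>"
    and weq: "?w = (\<Sum>\<rho>\<in>\<sigma>. c \<rho> *\<^sub>R rv v \<rho>)"
    unfolding coneS_def by blast
  define \<sigma>' where "\<sigma>' = {\<rho>\<in>\<sigma>. c \<rho> \<noteq> 0}"
  have s': "\<sigma>' \<in> S" by (rule fan_down[OF f s]) (auto simp: \<sigma>'_def)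
  have fins: "finite \<sigma>" using fan_sub[OF f s] by (rule finite_subset) simp
  have fin: "finite \<sigma>'" by (rule finite_subset[OF _ fins]) (auto simp: \<sigma>'_def)
  have "(\<Sum>\<rho>\<in>\<sigma>'. c \<rho> *\<^sub>R rv v \<rho>) = (\<Sum>\<rho>\<in>\<sigma>. c \<rho> *\<^sub>R rv v \<rho>)"
    by (rule sum.mono_neutral_left[OF fins]) (auto simp: \<sigma>'_def)
  then have weq': "(\<Sum>\<rho>\<in>\<sigma>'. c \<rho> *\<^sub>R rv v \<rho>) = ?w" using weq by simp
  have wi: "\<forall>i. ?w $ i \<in> \<int>"
    by (simp add: rv_def Ints_sum)
  have cint: "c \<rho> \<in> \<int>" if "\<rho> \<in> \<sigma>'" for \<rho>
    by (rule unimod_int[OF fan_unimod[OF f s'] fin weq' wi that])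
  define ci where "ci \<rho> = \<lfloor>c \<rho>\<rfloor>" for \<rho>
  have cieq: "real_of_int (ci \<rho>) = c \<rho>" if "\<rho> \<in> \<sigma>'" for \<rho>
    using cint[OF that] unfolding ci_def by (metis Ints_cases floor_of_int)
  have cipos: "0 < ci \<rho>" if "\<rho> \<in> \<sigma>'" for \<rho>
  proof -
    have "0 < c \<rho>" using that cnn by (force simp: \<sigma>'_def)
    then show ?thesis using cieq[OF that] by simp
  qed
  have "(\<Sum>\<rho>\<in>\<sigma>'. real_of_int (ci \<rho>) *\<^sub>R rv v \<rho>) = (\<Sum>\<rho>\<in>\<sigma>'. c \<rho> *\<^sub>R rv v \<rho>)"
    by (rule sum.cong) (simp_all add: cieq)
  then have eq: "?w = (\<Sum>\<rho>\<in>\<sigma>'. real_of_int (ci \<rho>) *\<^sub>R rv v \<rho>)" using weq' by simp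
  show ?thesis
    unfolding primitive_relation_def
    apply (rule exI[of _ "\<lambda>\<rho>. (if \<rho> \<in> P then 1 else 0) - (if \<rho> \<in> \<sigma>' then ci \<rho> else 0)"])
    apply (rule bexI[OF _ s'])
    apply (rule exI[of _ ci])
    using cipos eq by simp
qed

lemma prim_zero:
  assumes f: "smooth_complete_fan r nn v S" and nefp: "nef_partition r nn v S"
    and al: "\<alpha> \<in> zero_locus (Jset r nn) (I_prime r nn v S betaN betar)"
    and P: "primitive_collection r nn S P"
  shows "\<exists>\<rho>\<in>P. \<alpha> \<rho> = 0"
proof -
  obtain l where l: "primitive_relation v S P l" using prim_rel_exists[OF f P] by blast
  let ?L = "ext_L r nn l"
  have "I_ell (Jset r nn) ?L \<in> I_prime r nn v S betaN betar"
    unfolding I_prime_def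
    apply (rule subsetD[OF gen_sub])
    apply (rule UnI1)
    apply (rule CollectI)
    apply (rule exI[of _ P], rule exI[of _ l])
    using P l by simp
  then have "eval (I_ell (Jset r nn) ?L) \<alpha> = 0" using al by (simp add: zero_locus_def)
  then obtain x k where xJ: "x \<in> Jset r nn" and k: "k < nat (?L x)" and ax: "\<alpha> x = of_nat k"
    using eval_I_ell_zero[OF finite_Jset] by blast
  have Lpos: "0 < ?L x" using k by simp
  have dual: "?L \<in> nef_dual_Lext r nn v S" using prim_rel_dual[OF f P l] by blast
  have xR: "x \<in> rays r nn"
  proof (rule ccontr)
    assume "x \<notin> rays r nn"
    then have "snd x = 0 \<and> fst x < r" using J_not_rays[OF xJ] by blast
    then have "?L (fst x, 0) \<le> 0" using dual_i0[OF nefp dual] by blast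
    moreover have "x = (fst x, 0)" using \<open>snd x = 0 \<and> fst x < r\<close> by (cases x) simp
    ultimately show False using Lpos by (metis not_le)
  qed
  obtain \<sigma> c where cpos: "\<forall>\<rho>\<in>\<sigma>. 0 < c \<rho>"
    and ld: "l = (\<lambda>\<rho>. (if \<rho> \<in> P then 1 else 0) - (if \<rho> \<in> \<sigma> then c \<rho> else 0))"
    using l unfolding primitive_relation_def by blast
  have Lx: "?L x = l x" using ext_L_rays[OF xR] .
  have "x \<notin> \<sigma>"
  proof
    assume "x \<in> \<sigma>"
    then have "l x \<le> 0" using cpos ld by (auto split: if_splits)
    then show False using Lpos Lx by simp
  qed
  moreover have "x \<in> P"
  proof (rule ccontr)
    assume "x \<notin> P"
    then have "l x \<le> 0" using cpos ld by (auto split: if_splits)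
    then show False using Lpos Lx by simp
  qed
  ultimately have "l x = 1" using ld by simp
  then have "k = 0" using k Lx by simp
  then show ?thesis using ax \<open>x \<in> P\<close> by auto
qed

lemma cone_T:
  assumes f: "smooth_complete_fan r nn v S"
    and H: "\<forall>P. primitive_collection r nn S P \<longrightarrow> (\<exists>\<rho>\<in>P. \<alpha> \<rho> = 0)"
  shows "{\<rho>\<in>rays r nn. \<alpha> \<rho> \<noteq> 0} \<in> S"
proof (rule ccontr)
  let ?U = "{\<rho>\<in>rays r nn. \<alpha> \<rho> \<noteq> 0}"
  assume nU: "?U \<notin> S"
  let ?F = "{Q. Q \<subseteq> ?U \<and> Q \<notin> S}"
  have finF: "finite ?F"
  proof (rule finite_subset)
    show "?F \<subseteq> Pow ?U" by blast
    show "finite (Pow ?U)" by simp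
  qed
  have UF: "?U \<in> ?F" using nU by blast
  obtain Q where QF: "Q \<in> ?F" and mn: "\<forall>b\<in>?F. b \<le> Q \<longrightarrow> Q = b"
    using finite_has_minimal2[OF finF UF] by blast
  have "primitive_collection r nn S Q"
    unfolding primitive_collection_def
  proof (intro conjI allI impI)
    show "Q \<subseteq> rays r nn" using QF by blast
    show "Q \<notin> S" using QF by blast
  next
    fix Q' assume "Q' \<subset> Q"
    show "Q' \<in> S"
    proof (rule ccontr)
      assume "Q' \<notin> S"
      then have "Q' \<in> ?F" using QF \<open>Q' \<subset> Q\<close> by blast
      then show False using mn \<open>Q' \<subset> Q\<close> by blast
    qed
  qed
  then obtain \<rho> where "\<rho> \<in> Q" "\<alpha> \<rho> = 0" using H by blast
  then show False using QF by blast
qed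

lemma final:
  fixes v :: "nat \<Rightarrow> nat \<Rightarrow> int^'n"
  assumes f: "smooth_complete_fan r nn v S" and proj: "projective_fan r nn v S"
    and L: "L \<in> nef_dual_Lext r nn v S" and L0: "L \<noteq> (\<lambda>_. 0)"
    and U: "{\<rho>\<in>rays r nn. \<alpha> \<rho> \<noteq> 0} \<in> S"
  shows "eval (I_ell (Jset r nn) L) \<alpha> = 0"
proof (rule ccontr)
  let ?R = "rays r nn"
  let ?U = "{\<rho>\<in>rays r nn. \<alpha> \<rho> \<noteq> 0}"
  assume "eval (I_ell (Jset r nn) L) \<alpha> \<noteq> 0"
  then have nz: "\<forall>x\<in>Jset r nn. \<forall>k<nat (L x). \<alpha> x \<noteq> of_nat k"
    using eval_I_ell_zero[OF finite_Jset] by blast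
  have Lneg: "L \<rho> \<le> 0" if "\<rho> \<in> ?R" "\<alpha> \<rho> = 0" for \<rho>
  proof (rule ccontr)
    assume "\<not> L \<rho> \<le> 0"
    then have "0 < nat (L \<rho>)" by simp
    moreover have "\<rho> \<in> Jset r nn" using that rays_sub_J by blast
    then have "\<forall>k<nat (L \<rho>). \<alpha> \<rho> \<noteq> of_nat k" by (rule bspec[OF nz])
    then have "0 < nat (L \<rho>) \<longrightarrow> \<alpha> \<rho> \<noteq> of_nat 0" by (rule spec)
    then have "\<alpha> \<rho> \<noteq> of_nat 0" using \<open>0 < nat (L \<rho>)\<close> by (rule mp)
    moreover have "\<alpha> \<rho> = of_nat 0" using that(2) by simp
    ultimately show False by blast
  qed
  obtain \<sigma>m where mc: "max_cone S \<sigma>m" and Usub: "?U \<subseteq> \<sigma>m" using max_exists[OF f U] by blast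
  have sm: "\<sigma>m \<in> S" using mc by (simp add: max_cone_def)
  have smR: "\<sigma>m \<subseteq> ?R" using fan_sub[OF f sm] .
  obtain a :: "nat \<times> nat \<Rightarrow> int" where amp: "ample_div r nn v S (\<lambda>\<rho>. real_of_int (a \<rho>))"
    using proj unfolding projective_fan_def by blast
  obtain m :: "real^'n" where h1: "\<forall>\<rho>\<in>\<sigma>m. m \<bullet> rv v \<rho> = - real_of_int (a \<rho>)"
    and h2: "\<forall>\<rho>\<in>?R - \<sigma>m. m \<bullet> rv v \<rho> > - real_of_int (a \<rho>)"
    using amp mc unfolding ample_div_def by blast
  have ge: "0 \<le> (\<Sum>\<rho>\<in>?R. real_of_int (L \<rho>) * real_of_int (a \<rho>))"
    using L ample_nef[OF amp] unfolding nef_dual_Lext_def by blast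
  have lin: "(\<Sum>\<rho>\<in>?R. real_of_int (L \<rho>) *\<^sub>R rv v \<rho>) = 0"
    using L unfolding nef_dual_Lext_def Lext_def by blast
  have z: "(\<Sum>\<rho>\<in>?R. real_of_int (L \<rho>) * (m \<bullet> rv v \<rho>)) = 0"
  proof -
    have "(\<Sum>\<rho>\<in>?R. real_of_int (L \<rho>) * (m \<bullet> rv v \<rho>)) = m \<bullet> (\<Sum>\<rho>\<in>?R. real_of_int (L \<rho>) *\<^sub>R rv v \<rho>)"
      by (simp add: inner_sum_right)
    then show ?thesis using lin by simp
  qed
  define g where "g \<rho> = real_of_int (L \<rho>) * (real_of_int (a \<rho>) + m \<bullet> rv v \<rho>)" for \<rho>
  have sumg: "0 \<le> sum g ?R"
  proof -
    have "sum g ?R = (\<Sum>\<rho>\<in>?R. real_of_int (L \<rho>) * real_of_int (a \<rho>)) + (\<Sum>\<rho>\<in>?R. real_of_int (L \<rho>) * (m \<bullet> rv v \<rho>))"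
      unfolding g_def by (simp add: distrib_left sum.distrib)
    then show ?thesis using ge z by simp
  qed
  have gle: "g \<rho> \<le> 0" if "\<rho> \<in> ?R" for \<rho>
  proof (cases "\<rho> \<in> \<sigma>m")
    case True
    then show ?thesis using h1 by (simp add: g_def)
  next
    case False
    then have "\<alpha> \<rho> = 0" using Usub that by blast
    then have "L \<rho> \<le> 0" using Lneg that by blast
    moreover have "0 < real_of_int (a \<rho>) + m \<bullet> rv v \<rho>" using h2 that False by force
    ultimately show ?thesis unfolding g_def by (simp add: mult_nonpos_nonneg)
  qed
  have "sum (\<lambda>\<rho>. - g \<rho>) ?R = 0"
    using sumg sum_nonpos[of ?R g] gle by (simp add: sum_negf)
  then have g0: "\<forall>\<rho>\<in>?R. - g \<rho> = 0"
    using sum_nonneg_eq_0_iff[where f="\<lambda>\<rho>. - g \<rho>" and A="rays r nn"] gle by simp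
  have Lout: "L \<rho> = 0" if "\<rho> \<in> ?R - \<sigma>m" for \<rho>
  proof -
    have "0 < real_of_int (a \<rho>) + m \<bullet> rv v \<rho>" using h2 that by force
    moreover have "g \<rho> = 0" using g0 that by simp
    ultimately show ?thesis unfolding g_def by simp
  qed
  have "(\<Sum>\<rho>\<in>\<sigma>m. real_of_int (L \<rho>) *\<^sub>R rv v \<rho>) = (\<Sum>\<rho>\<in>?R. real_of_int (L \<rho>) *\<^sub>R rv v \<rho>)"
    by (rule sum.mono_neutral_left[OF finite_rays smR]) (simp add: Lout)
  then have lin': "(\<Sum>\<rho>\<in>\<sigma>m. real_of_int (L \<rho>) *\<^sub>R rv v \<rho>) = 0" using lin by simp
  have finm: "finite \<sigma>m" using smR by (rule finite_subset) simp
  have Lin: "L \<rho> = 0" if "\<rho> \<in> \<sigma>m" for \<rho>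
    using unimod_indep[OF fan_unimod[OF f sm] finm lin' that] by simp
  have LR: "L \<rho> = 0" if "\<rho> \<in> ?R" for \<rho>
    using Lin Lout that by blast
  have "L x = 0" for x
  proof (cases "x \<in> Jset r nn")
    case False
    then show ?thesis using L unfolding nef_dual_Lext_def Lext_def by blast
  next
    case True
    show ?thesis
    proof (cases "x \<in> ?R")
      case True then show ?thesis using LR by blast
    next
      case False
      then have x: "snd x = 0 \<and> fst x < r" using J_not_rays[OF \<open>x \<in> Jset r nn\<close>] by blast
      define i where "i = fst x"
      have xi: "x = (i, 0)" using x unfolding i_def by (cases x) simp
      have ir: "i < r" using x i_def by simp
      have "(\<Sum>j\<le>nn i. L (i,j)) = 0" using L ir unfolding nef_dual_Lext_def Lext_def by blast
      then have "L (i,0) + (\<Sum>j\<in>{1..nn i}. L (i,j)) = 0" by (simp only: sum_split0)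
      moreover have "(\<Sum>j\<in>{1..nn i}. L (i,j)) = 0"
        by (rule sum.neutral) (use ir LR in \<open>auto simp: rays_def\<close>)
      ultimately show ?thesis using xi by simp
    qed
  qed
  then show False using L0 by auto
qed

theorem mainTheorem7:
  fixes r :: nat and nn :: "nat \<Rightarrow> nat" and v :: "nat \<Rightarrow> nat \<Rightarrow> int^'n"
    and S :: "(nat \<times> nat) set set"
  assumes fan: "smooth_complete_fan r nn v S"
    and proj: "projective_fan r nn v S"
    and nefp: "nef_partition r nn v S"
  shows "I_prime r nn v S 0 (\<lambda>_. - 1/2) \<subseteq> Ind_nef r nn v S 0 (\<lambda>_. - 1/2) \<and>
         zero_locus (Jset r nn) (I_prime r nn v S 0 (\<lambda>_. - 1/2))
           = zero_locus (Jset r nn) (Ind_nef r nn v S 0 (\<lambda>_. - 1/2))"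
proof -
  let ?I = "I_prime r nn v S 0 (\<lambda>_. - 1/2)"
  let ?N = "Ind_nef r nn v S 0 (\<lambda>_. - 1/2)"
  let ?J = "Jset r nn"
  have sub: "?I \<subseteq> ?N"
    unfolding I_prime_def Ind_nef_def
  proof (rule ideal_gen_mono, rule Un_mono[OF _ subset_refl], rule subsetI)
    fix g assume "g \<in> {I_ell ?J (ext_L r nn l) | P l.
         primitive_collection r nn S P \<and> primitive_relation v S P l}"
    then obtain P l where g: "g = I_ell ?J (ext_L r nn l)" and P: "primitive_collection r nn S P"
      and l: "primitive_relation v S P l" by blast
    have "ext_L r nn l \<in> nef_dual_Lext r nn v S \<and> ext_L r nn l \<noteq> (\<lambda>_. 0)"
      by (rule prim_rel_dual[OF fan P l])
    then show "g \<in> {I_ell ?J l | l. l \<in> nef_dual_Lext r nn v S \<and> l \<noteq> (\<lambda>_. 0)}"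
      using g by blast
  qed
  have z1: "zero_locus ?J ?N \<subseteq> zero_locus ?J ?I"
    using sub unfolding zero_locus_def by blast
  have z2: "zero_locus ?J ?I \<subseteq> zero_locus ?J ?N"
  proof
    fix \<alpha> assume al: "\<alpha> \<in> zero_locus ?J ?I"
    have H: "\<forall>P. primitive_collection r nn S P \<longrightarrow> (\<exists>\<rho>\<in>P. \<alpha> \<rho> = 0)"
      using prim_zero[OF fan nefp al] by blast
    have U: "{\<rho>\<in>rays r nn. \<alpha> \<rho> \<noteq> 0} \<in> S" by (rule cone_T[OF fan H])
    have gz: "eval g \<alpha> = 0" if g: "g \<in> {I_ell ?J l | l. l \<in> nef_dual_Lext r nn v S \<and> l \<noteq> (\<lambda>_. 0)}
      \<union> lin_gens r nn v 0 (\<lambda>_. - 1/2)" for g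
    proof (cases "g \<in> lin_gens r nn v 0 (\<lambda>_. - 1/2)")
      case True
      then have "g \<in> ?I" unfolding I_prime_def by (rule subsetD[OF gen_sub, OF UnI2])
      then show ?thesis using al unfolding zero_locus_def by blast
    next
      case False
      then obtain L where gL: "g = I_ell ?J L" and L: "L \<in> nef_dual_Lext r nn v S" and L0: "L \<noteq> (\<lambda>_. 0)"
        using g by blast
      show ?thesis unfolding gL by (rule final[OF fan proj L L0 U])
    qed
    have "eval p \<alpha> = 0" if "p \<in> ?N" for p
    proof -
      obtain F c where F: "finite F" "F \<subseteq> {I_ell ?J l | l. l \<in> nef_dual_Lext r nn v S \<and> l \<noteq> (\<lambda>_. 0)}
        \<union> lin_gens r nn v 0 (\<lambda>_. - 1/2)" and p: "p = (\<Sum>g\<in>F. c g * g)"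
        using \<open>p \<in> ?N\<close> unfolding Ind_nef_def ideal_gen_def by blast
      have "eval p \<alpha> = (\<Sum>g\<in>F. eval (c g) \<alpha> * eval g \<alpha>)"
        unfolding p by (simp only: eval_sum eval_mult)
      also have "\<dots> = 0"
      proof (rule sum.neutral, rule ballI)
        fix g assume "g \<in> F"
        then have "eval g \<alpha> = 0" using F(2) gz by blast
        then show "eval (c g) \<alpha> * eval g \<alpha> = 0" by simp
      qed
      finally show ?thesis .
    qed
    then show "\<alpha> \<in> zero_locus ?J ?N" using al unfolding zero_locus_def by blast
  qed
  show ?thesis using sub z1 z2 by blast
qed

end
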